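(* In the stochastic epidemic model described in the context, let $u(k)=K\,I(k)$ for all $k\ge0$ with a constant gain $0\le K\le (1-d_{\max})/v_{\max}$. Then for every $k\ge1$, $$\mathbb{E}[D(k)]=\begin{cases}\dfrac{\overline{d_I}\,I_0\left(1-(1+\overline{\delta}-\overline{d_I}-K\overline{v})^k\right)}{K\overline{v}-\overline{\delta}+\overline{d_I}}, & K\overline{v}-\overline{\delta}+\overline{d_I}>0,\\[2mm] \overline{d_I}\,I_0\,k, & K\overline{v}-\overline{\delta}+\overline{d_I}=0.\end{cases}$$
   Context: Time is indexed by days $k=0,1,2,\dots$. Let $(\delta(k))_{k\ge0}$, $(d_I(k))_{k\ge0}$, $(v(k))_{k\ge0}$ be three mutually independent sequences of random variables, each sequence i.i.d. in $k$, with $0\le \delta(k)\le \delta_{\max}$, $0\le d_I(k)\le d_{\max}$ where $d_{\max}<1$, and $0<v_{\min}\le v(k)\le v_{\max}\le 1$. Write $\overline{\delta}=\mathbb{E}[\delta(k)]$, $\overline{d_I}=\mathbb{E}[d_I(k)]$, $\overline{v}=\mathbb{E}[v(k)]$. Given a control sequence $u(k)$, the cases evolve by $S(k+1)=S(k)-\delta(k)I(k)$, $I(k+1)=(1+\delta(k))I(k)-v(k)u(k)-d_I(k)I(k)$, $R(k+1)=R(k)+v(k)u(k)$, $D(k+1)=D(k)+d_I(k)I(k)$, with $S(0)=S_0$, $I(0)=I_0>0$, $R(0)=D(0)=0$, $I_0\delta_{\max}<S_0$. *)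

theory Defs
  imports "HOL-Probability.Probability"
begin

fun epi_I :: "(nat \<Rightarrow> 'a \<Rightarrow> real) \<Rightarrow> (nat \<Rightarrow> 'a \<Rightarrow> real) \<Rightarrow> (nat \<Rightarrow> 'a \<Rightarrow> real)
      \<Rightarrow> (nat \<Rightarrow> 'a \<Rightarrow> real) \<Rightarrow> real \<Rightarrow> nat \<Rightarrow> 'a \<Rightarrow> real" where
  "epi_I \<delta> dI v u I0 0 \<omega> = I0"
| "epi_I \<delta> dI v u I0 (Suc k) \<omega> =
     (1 + \<delta> k \<omega>) * epi_I \<delta> dI v u I0 k \<omega> - v k \<omega> * u k \<omega> - dI k \<omega> * epi_I \<delta> dI v u I0 k \<omega>"

fun epi_S :: "(nat \<Rightarrow> 'a \<Rightarrow> real) \<Rightarrow> (nat \<Rightarrow> 'a \<Rightarrow> real) \<Rightarrow> (nat \<Rightarrow> 'a \<Rightarrow> real)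
      \<Rightarrow> (nat \<Rightarrow> 'a \<Rightarrow> real) \<Rightarrow> real \<Rightarrow> real \<Rightarrow> nat \<Rightarrow> 'a \<Rightarrow> real" where
  "epi_S \<delta> dI v u S0 I0 0 \<omega> = S0"
| "epi_S \<delta> dI v u S0 I0 (Suc k) \<omega> = epi_S \<delta> dI v u S0 I0 k \<omega> - \<delta> k \<omega> * epi_I \<delta> dI v u I0 k \<omega>"

fun epi_R :: "(nat \<Rightarrow> 'a \<Rightarrow> real) \<Rightarrow> (nat \<Rightarrow> 'a \<Rightarrow> real) \<Rightarrow> nat \<Rightarrow> 'a \<Rightarrow> real" where
  "epi_R v u 0 \<omega> = 0"
| "epi_R v u (Suc k) \<omega> = epi_R v u k \<omega> + v k \<omega> * u k \<omega>"

fun epi_D :: "(nat \<Rightarrow> 'a \<Rightarrow> real) \<Rightarrow> (nat \<Rightarrow> 'a \<Rightarrow> real) \<Rightarrow> (nat \<Rightarrow> 'a \<Rightarrow> real)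
      \<Rightarrow> (nat \<Rightarrow> 'a \<Rightarrow> real) \<Rightarrow> real \<Rightarrow> nat \<Rightarrow> 'a \<Rightarrow> real" where
  "epi_D \<delta> dI v u I0 0 \<omega> = 0"
| "epi_D \<delta> dI v u I0 (Suc k) \<omega> = epi_D \<delta> dI v u I0 k \<omega> + dI k \<omega> * epi_I \<delta> dI v u I0 k \<omega>"

datatype coef = Cdelta nat | CdI nat | Cv nat

fun coef_family :: "(nat \<Rightarrow> 'a \<Rightarrow> real) \<Rightarrow> (nat \<Rightarrow> 'a \<Rightarrow> real) \<Rightarrow> (nat \<Rightarrow> 'a \<Rightarrow> real)
      \<Rightarrow> coef \<Rightarrow> 'a \<Rightarrow> real" where
  "coef_family \<delta> dI v (Cdelta k) = \<delta> k"
| "coef_family \<delta> dI v (CdI k) = dI k"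
| "coef_family \<delta> dI v (Cv k) = v k"

end

theory Submission
  imports Defs
begin


fun cidx :: "coef \<Rightarrow> nat" where
  "cidx (Cdelta i) = i" | "cidx (CdI i) = i" | "cidx (Cv i) = i"

theorem lemma11:
  fixes M :: "'a measure"
    and \<delta> dI v u :: "nat \<Rightarrow> 'a \<Rightarrow> real"
    and \<delta>max dmax vmin vmax S0 I0 K :: real
  assumes "prob_space M"
    and indep: "prob_space.indep_vars M (\<lambda>_. borel) (coef_family \<delta> dI v) UNIV"
    and iid_delta: "\<And>k. distr M borel (\<delta> k) = distr M borel (\<delta> 0)"
    and iid_dI: "\<And>k. distr M borel (dI k) = distr M borel (dI 0)"
    and iid_v: "\<And>k. distr M borel (v k) = distr M borel (v 0)"
    and delta_bd: "\<And>k \<omega>. \<omega> \<in> space M \<Longrightarrow> 0 \<le> \<delta> k \<omega> \<and> \<delta> k \<omega> \<le> \<delta>max"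
    and dI_bd: "\<And>k \<omega>. \<omega> \<in> space M \<Longrightarrow> 0 \<le> dI k \<omega> \<and> dI k \<omega> \<le> dmax"
    and dmax_lt: "dmax < 1"
    and v_bd: "\<And>k \<omega>. \<omega> \<in> space M \<Longrightarrow> vmin \<le> v k \<omega> \<and> v k \<omega> \<le> vmax"
    and vmin_pos: "0 < vmin" and vmax_le: "vmax \<le> 1"
    and I0_pos: "0 < I0" and S0_gt: "I0 * \<delta>max < S0"
    and K_bd: "0 \<le> K" "K \<le> (1 - dmax) / vmax"
    and control: "\<And>k \<omega>. u k \<omega> = K * epi_I \<delta> dI v u I0 k \<omega>"
    and k_ge: "1 \<le> k"
  shows "let db = prob_space.expectation M (\<delta> 0);
             dIb = prob_space.expectation M (dI 0);
             vb = prob_space.expectation M (v 0);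
             c = K * vb - db + dIb
         in (c > 0 \<longrightarrow> prob_space.expectation M (epi_D \<delta> dI v u I0 k)
                        = dIb * I0 * (1 - (1 + db - dIb - K * vb) ^ k) / c)
          \<and> (c = 0 \<longrightarrow> prob_space.expectation M (epi_D \<delta> dI v u I0 k) = dIb * I0 * real k)"
proof -
  interpret prob_space M by fact
  define cf where "cf = coef_family \<delta> dI v"
  define f where "f i \<omega> = 1 + \<delta> i \<omega> - K * v i \<omega> - dI i \<omega>" for i \<omega>
  let ?I = "epi_I \<delta> dI v u I0"
  let ?D = "epi_D \<delta> dI v u I0"
  have Iprod: "?I k \<omega> = I0 * (\<Prod>i<k. f i \<omega>)" for k \<omega>
  proof (induction k)
    case (Suc k)
    have "?I (Suc k) \<omega> = f k \<omega> * ?I k \<omega>"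
      by (simp only: epi_I.simps control[of k \<omega>]) (simp add: f_def algebra_simps)
    then show ?case using Suc by (simp add: mult.commute mult.left_commute)
  qed simp
  have Dsum: "?D k \<omega> = (\<Sum>j<k. dI j \<omega> * ?I j \<omega>)" for k \<omega>
    by (induction k) simp_all
  have rv: "random_variable borel (cf c)" for c
    using indep unfolding cf_def indep_vars_def by auto
  have md: "\<delta> i \<in> borel_measurable M" for i using rv[of "Cdelta i"] by (simp add: cf_def)
  have mdI: "dI i \<in> borel_measurable M" for i using rv[of "CdI i"] by (simp add: cf_def)
  have mv: "v i \<in> borel_measurable M" for i using rv[of "Cv i"] by (simp add: cf_def)
  define A where "A k = {Cdelta k, CdI k, Cv k}" for k
  define B where "B k = {c. cidx c < k}" for k
  have AB: "A k \<inter> B k = {}" for k by (auto simp: A_def B_def)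
  have ind2: "indep_var (PiM (A k) (\<lambda>_. borel)) (\<lambda>\<omega>. restrict (\<lambda>i. cf i \<omega>) (A k))
                        (PiM (B k) (\<lambda>_. borel)) (\<lambda>\<omega>. restrict (\<lambda>i. cf i \<omega>) (B k))" for k
    using indep_var_restrict[OF indep[folded cf_def] AB] by simp
  define G where "G k x = I0 * (\<Prod>i<k. 1 + x (Cdelta i) - K * x (Cv i) - x (CdI i))" for k and x :: "coef \<Rightarrow> real"
  have Gm: "G k \<in> borel_measurable (PiM (B k) (\<lambda>_. borel))" for k
  proof -
    have "(\<lambda>x. x c) \<in> borel_measurable (PiM (B k) (\<lambda>_. borel))" if "c \<in> B k" for c
      by (rule measurable_component_singleton[OF that])
    moreover have "Cdelta i \<in> B k" "Cv i \<in> B k" "CdI i \<in> B k" if "i < k" for i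
      using that by (auto simp: B_def)
    ultimately show ?thesis unfolding G_def
      by (intro borel_measurable_times borel_measurable_const borel_measurable_prod
          borel_measurable_diff borel_measurable_add borel_measurable_times) auto
  qed
  define F where "F k x = 1 + x (Cdelta k) - K * x (Cv k) - x (CdI k)" for k and x :: "coef \<Rightarrow> real"
  define H where "H k x = x (CdI k)" for k and x :: "coef \<Rightarrow> real"
  have Fm: "F k \<in> borel_measurable (PiM (A k) (\<lambda>_. borel))" "H k \<in> borel_measurable (PiM (A k) (\<lambda>_. borel))" for k
  proof -
    have c: "(\<lambda>x. x c) \<in> borel_measurable (PiM (A k) (\<lambda>_. borel))" if "c \<in> A k" for c
      by (rule measurable_component_singleton[OF that])
    have m: "Cdelta k \<in> A k" "Cv k \<in> A k" "CdI k \<in> A k" by (auto simp: A_def)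
    show "F k \<in> borel_measurable (PiM (A k) (\<lambda>_. borel))" unfolding F_def
      using c[OF m(1)] c[OF m(2)] c[OF m(3)] by measurable
    show "H k \<in> borel_measurable (PiM (A k) (\<lambda>_. borel))" unfolding H_def
      using c[OF m(3)] by simp
  qed
  have GI: "G k o (\<lambda>\<omega>. restrict (\<lambda>i. cf i \<omega>) (B k)) = ?I k" for k
    by (auto simp: fun_eq_iff G_def Iprod f_def B_def cf_def intro!: prod.cong)
  have FI: "F k o (\<lambda>\<omega>. restrict (\<lambda>i. cf i \<omega>) (A k)) = f k" for k
    by (auto simp: fun_eq_iff F_def f_def A_def cf_def)
  have HI: "H k o (\<lambda>\<omega>. restrict (\<lambda>i. cf i \<omega>) (A k)) = dI k" for k
    by (auto simp: fun_eq_iff H_def A_def cf_def)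
  have indf: "indep_var borel (f k) borel (?I k)" for k
    using indep_var_compose[OF ind2 Fm(1) Gm] FI GI by simp
  have inddI: "indep_var borel (dI k) borel (?I k)" for k
    using indep_var_compose[OF ind2 Fm(2) Gm] HI GI by simp
  have mf: "f k \<in> borel_measurable M" for k unfolding f_def using md mv mdI by measurable
  have mI: "?I k \<in> borel_measurable M" for k unfolding Iprod using mf by measurable
  define C where "C = 1 + \<delta>max + K * vmax + dmax"
  have fb: "\<bar>f i \<omega>\<bar> \<le> C" if "\<omega> \<in> space M" for i \<omega>
  proof -
    have "0 \<le> \<delta> i \<omega>" "\<delta> i \<omega> \<le> \<delta>max" using delta_bd[OF that] by auto
    moreover have "0 \<le> dI i \<omega>" "dI i \<omega> \<le> dmax" using dI_bd[OF that] by auto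
    moreover have "0 \<le> v i \<omega>" "v i \<omega> \<le> vmax" using v_bd[OF that, of i] vmin_pos by auto
    moreover have "0 \<le> K * v i \<omega>" "K * v i \<omega> \<le> K * vmax" using K_bd calculation
      by (auto intro: mult_left_mono)
    ultimately show ?thesis unfolding f_def C_def by auto
  qed
  have intf: "integrable M (f k)" for k
    by (rule integrable_const_bound[where B=C]) (use fb mf in auto)
  have intdI: "integrable M (dI k)" for k
  proof (rule integrable_const_bound[where B=dmax])
    show "AE x in M. norm (dI k x) \<le> dmax"
      by (rule AE_I2) (use dI_bd in fastforce)
  qed (fact mdI)
  have intI: "integrable M (?I k)" for k
  proof (rule integrable_const_bound[where B="\<bar>I0\<bar> * C ^ k"])
    show "AE x in M. norm (?I k x) \<le> \<bar>I0\<bar> * C ^ k"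
    proof (rule AE_I2)
      fix x assume x: "x \<in> space M"
      have "\<bar>\<Prod>i<k. f i x\<bar> \<le> (\<Prod>i<k. C)" unfolding abs_prod
        by (rule prod_mono) (use fb[OF x] in auto)
      then show "norm (?I k x) \<le> \<bar>I0\<bar> * C ^ k"
        by (simp add: Iprod abs_mult mult_left_mono)
    qed
  qed (fact mI)
  define db where "db = expectation (\<delta> 0)"
  define dIb where "dIb = expectation (dI 0)"
  define vb where "vb = expectation (v 0)"
  define a where "a = 1 + db - dIb - K * vb"
  have Eeq: "expectation (X k) = expectation (X 0)" if "\<And>k. distr M borel (X k) = distr M borel (X 0)"
       "\<And>k. X k \<in> borel_measurable M" for X :: "nat \<Rightarrow> 'a \<Rightarrow> real" and k
  proof -
    have "expectation (X k) = integral\<^sup>L (distr M borel (X k)) (\<lambda>x. x)"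
      by (simp add: integral_distr that(2))
    also have "\<dots> = integral\<^sup>L (distr M borel (X 0)) (\<lambda>x. x)" by (simp only: that(1)[of k])
    also have "\<dots> = expectation (X 0)" by (simp add: integral_distr that(2))
    finally show ?thesis .
  qed
  have intd: "integrable M (\<delta> k)" for k
  proof (rule integrable_const_bound[where B="\<delta>max"])
    show "AE x in M. norm (\<delta> k x) \<le> \<delta>max"
      by (rule AE_I2) (use delta_bd in fastforce)
  qed (fact md)
  have intv: "integrable M (v k)" for k
  proof (rule integrable_const_bound[where B="vmax"])
    show "AE x in M. norm (v k x) \<le> vmax"
    proof (rule AE_I2)
      fix x assume "x \<in> space M"
      from v_bd[OF this, of k] vmin_pos show "norm (v k x) \<le> vmax" by auto
    qed
  qed (fact mv)
  have Ef: "expectation (f k) = a" for k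
  proof -
    have "expectation (f k) = 1 + expectation (\<delta> k) - K * expectation (v k) - expectation (dI k)"
    proof -
      have "expectation (f k) = expectation (\<lambda>\<omega>. 1 + \<delta> k \<omega> - K * v k \<omega>) - expectation (dI k)"
        unfolding f_def using intd intv intdI by (subst Bochner_Integration.integral_diff) auto
      also have "expectation (\<lambda>\<omega>. 1 + \<delta> k \<omega> - K * v k \<omega>) = expectation (\<lambda>\<omega>. 1 + \<delta> k \<omega>) - expectation (\<lambda>\<omega>. K * v k \<omega>)"
        using intd intv by (subst Bochner_Integration.integral_diff) auto
      also have "expectation (\<lambda>\<omega>. 1 + \<delta> k \<omega>) = 1 + expectation (\<delta> k)"
        using intd by (simp add: prob_space)
      also have "expectation (\<lambda>\<omega>. K * v k \<omega>) = K * expectation (v k)"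
        by simp
      finally show ?thesis .
    qed
    then show ?thesis
      using Eeq[of \<delta> k, OF iid_delta md] Eeq[of v k, OF iid_v mv] Eeq[of dI k, OF iid_dI mdI]
      by (simp add: a_def db_def dIb_def vb_def)
  qed
  have EdI: "expectation (dI k) = dIb" for k
    using Eeq[of dI k, OF iid_dI mdI] by (simp add: dIb_def)
  have EI: "expectation (?I k) = I0 * a ^ k" for k
  proof (induction k)
    case 0 then show ?case by (simp add: prob_space)
  next
    case (Suc k)
    have "?I (Suc k) = (\<lambda>\<omega>. f k \<omega> * ?I k \<omega>)"
      by (simp add: fun_eq_iff Iprod del: epi_I.simps)
    then have "expectation (?I (Suc k)) = expectation (f k) * expectation (?I k)"
      using indep_var_lebesgue_integral[OF indf intf intI] by simp
    then show ?case using Suc Ef[of k] by (simp del: epi_I.simps)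
  qed
  have ED: "expectation (?D k) = (\<Sum>j<k. dIb * I0 * a ^ j)" for k
  proof -
    have "expectation (?D k) = (\<Sum>j<k. expectation (\<lambda>\<omega>. dI j \<omega> * ?I j \<omega>))"
      unfolding Dsum by (rule Bochner_Integration.integral_sum) (rule indep_var_integrable[OF inddI intdI intI])
    also have "\<dots> = (\<Sum>j<k. dIb * I0 * a ^ j)"
      by (rule sum.cong) (simp_all add: indep_var_lebesgue_integral[OF inddI intdI intI] EdI EI)
    finally show ?thesis .
  qed
  have ED2: "expectation (?D k) = dIb * I0 * (\<Sum>j<k. a ^ j)"
    unfolding ED by (simp add: sum_distrib_left)
  show ?thesis
    unfolding Let_def db_def[symmetric] dIb_def[symmetric] vb_def[symmetric] a_def[symmetric] ED2
  proof safe
    assume c: "K * vb - db + dIb > 0"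
    then have "a \<noteq> 1" "1 - a = K * vb - db + dIb" by (auto simp: a_def)
    then show "dIb * I0 * (\<Sum>j<k. a ^ j) = dIb * I0 * (1 - a ^ k) / (K * vb - db + dIb)"
      by (simp add: sum_gp_strict)
  next
    assume c: "K * vb - db + dIb = 0"
    then have "a = 1" by (auto simp: a_def)
    then show "dIb * I0 * (\<Sum>j<k. a ^ j) = dIb * I0 * real k" by simp
  qed
qed

end
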